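(* If $\sigma : S \to A^\perp \parallel B$ and $\tau : T \to B^\perp \parallel C$ are backward sequential strategies (with $A, B, C$ arenas), so is $\tau \odot \sigma$.
   Context: $e \rightarrow e'$ denotes immediate causal dependency ($e<e'$ with nothing strictly between). A strategy $\sigma:S\to A$ (between event structures with polarities) is a map of esps which is courteous (if $s_1 \rightarrow s_2$ with $\mathrm{pol}(s_1)=+$ or $\mathrm{pol}(s_2)=-$ then $\sigma s_1 \rightarrow \sigma s_2$) and receptive (for every configuration $x$ of $S$, if $\sigma x$ extends by a negative event $a$ to a configuration, there is a unique $s$ with $x\cup\{s\}$ a configuration and $\sigma s=a$). An arena is a countable esp which is a forest, conflict-free and alternating. $S$ is backward sequential if for every $s\in S$ the set $[s]=\{s'\mid s'\le s\}$ is totally ordered. The composition $\tau\odot\sigma$ is obtained by taking the pullback $(S\parallel C)\circledast(A\parallel T)$ of $\sigma\parallel C$ and $A\parallel\tau$ and projecting onto the events not mapped to $B$. *)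

theory Defs
  imports Main "HOL-Library.Countable_Set"
begin

record 'e esp =
  events   :: "'e set"
  leq      :: "'e \<Rightarrow> 'e \<Rightarrow> bool"
  conflict :: "'e \<Rightarrow> 'e \<Rightarrow> bool"
  pol      :: "'e \<Rightarrow> bool"   (* True = positive, False = negative *)

definition is_es :: "'e esp \<Rightarrow> bool" where
  "is_es E \<longleftrightarrow>
     (\<forall>e e'. leq E e e' \<longrightarrow> e \<in> events E \<and> e' \<in> events E) \<and>
     (\<forall>e\<in>events E. leq E e e) \<and>
     (\<forall>e e'. leq E e e' \<and> leq E e' e \<longrightarrow> e = e') \<and>
     (\<forall>e e' e''. leq E e e' \<and> leq E e' e'' \<longrightarrow> leq E e e'') \<and>
     (\<forall>e\<in>events E. finite {e'. leq E e' e}) \<and>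
     (\<forall>e e'. conflict E e e' \<longrightarrow> e \<in> events E \<and> e' \<in> events E) \<and>
     (\<forall>e. \<not> conflict E e e) \<and>
     (\<forall>e e'. conflict E e e' \<longrightarrow> conflict E e' e) \<and>
     (\<forall>e e' e''. conflict E e e' \<and> leq E e' e'' \<longrightarrow> conflict E e e'')"

definition conf :: "'e esp \<Rightarrow> 'e set \<Rightarrow> bool" where
  "conf E x \<longleftrightarrow> finite x \<and> x \<subseteq> events E \<and>
     (\<forall>e\<in>x. \<forall>e'. leq E e' e \<longrightarrow> e' \<in> x) \<and>
     (\<forall>e\<in>x. \<forall>e'\<in>x. \<not> conflict E e e')"

definition imm :: "'e esp \<Rightarrow> 'e \<Rightarrow> 'e \<Rightarrow> bool" where
  "imm E e e' \<longleftrightarrow> leq E e e' \<and> e \<noteq> e' \<and>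
     \<not> (\<exists>e''. leq E e e'' \<and> leq E e'' e' \<and> e'' \<noteq> e \<and> e'' \<noteq> e')"

definition es_map :: "'e esp \<Rightarrow> 'f esp \<Rightarrow> ('e \<Rightarrow> 'f) \<Rightarrow> bool" where
  "es_map E F f \<longleftrightarrow> f ` events E \<subseteq> events F \<and>
     (\<forall>x. conf E x \<longrightarrow> conf F (f ` x) \<and> inj_on f x)"

definition esp_map :: "'e esp \<Rightarrow> 'f esp \<Rightarrow> ('e \<Rightarrow> 'f) \<Rightarrow> bool" where
  "esp_map E F f \<longleftrightarrow> es_map E F f \<and> (\<forall>e\<in>events E. pol F (f e) = pol E e)"

definition courteous :: "'e esp \<Rightarrow> 'f esp \<Rightarrow> ('e \<Rightarrow> 'f) \<Rightarrow> bool" where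
  "courteous S A \<sigma> \<longleftrightarrow> (\<forall>s1 s2. imm S s1 s2 \<and> (pol S s1 \<or> \<not> pol S s2) \<longrightarrow> imm A (\<sigma> s1) (\<sigma> s2))"

definition receptive :: "'e esp \<Rightarrow> 'f esp \<Rightarrow> ('e \<Rightarrow> 'f) \<Rightarrow> bool" where
  "receptive S A \<sigma> \<longleftrightarrow> (\<forall>x a. conf S x \<and> a \<notin> \<sigma> ` x \<and> conf A (insert a (\<sigma> ` x)) \<and> \<not> pol A a
       \<longrightarrow> (\<exists>!s. conf S (insert s x) \<and> s \<notin> x \<and> \<sigma> s = a))"

definition strategy :: "'e esp \<Rightarrow> 'f esp \<Rightarrow> ('e \<Rightarrow> 'f) \<Rightarrow> bool" where
  "strategy S A \<sigma> \<longleftrightarrow> is_es S \<and> is_es A \<and> esp_map S A \<sigma> \<and> courteous S A \<sigma> \<and> receptive S A \<sigma>"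

definition backward_sequential :: "'e esp \<Rightarrow> bool" where
  "backward_sequential E \<longleftrightarrow>
     (\<forall>e\<in>events E. \<forall>e1 e2. leq E e1 e \<and> leq E e2 e \<longrightarrow> leq E e1 e2 \<or> leq E e2 e1)"

definition dual :: "'e esp \<Rightarrow> 'e esp" where
  "dual A = A\<lparr>pol := (\<lambda>e. \<not> pol A e)\<rparr>"

definition par :: "'a esp \<Rightarrow> 'b esp \<Rightarrow> ('a + 'b) esp" where
  "par A B = \<lparr> events = Inl ` events A \<union> Inr ` events B,
      leq = (\<lambda>u v. case (u, v) of (Inl a, Inl a') \<Rightarrow> leq A a a'
                                | (Inr b, Inr b') \<Rightarrow> leq B b b' | _ \<Rightarrow> False),
      conflict = (\<lambda>u v. case (u, v) of (Inl a, Inl a') \<Rightarrow> conflict A a a'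
                                | (Inr b, Inr b') \<Rightarrow> conflict B b b' | _ \<Rightarrow> False),
      pol = case_sum (pol A) (pol B) \<rparr>"

definition arena :: "'a esp \<Rightarrow> bool" where
  "arena A \<longleftrightarrow> is_es A \<and> countable (events A) \<and>
     (\<forall>e\<in>events A. \<forall>e1 e2. leq A e1 e \<and> leq A e2 e \<longrightarrow> leq A e1 e2 \<or> leq A e2 e1) \<and>
     (\<forall>e e'. \<not> conflict A e e') \<and>
     (\<forall>e e'. imm A e e' \<longrightarrow> pol A e \<noteq> pol A e')"

definition sec_rel :: "'x esp \<Rightarrow> 'y esp \<Rightarrow> ('x \<times> 'y) set \<Rightarrow> (('x \<times> 'y) \<times> ('x \<times> 'y)) set" where
  "sec_rel X Y \<phi> = {(u, v). u \<in> \<phi> \<and> v \<in> \<phi> \<and> (leq X (fst u) (fst v) \<or> leq Y (snd u) (snd v))}"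

definition secured_bij :: "'x esp \<Rightarrow> 'y esp \<Rightarrow> ('x \<Rightarrow> 'g) \<Rightarrow> ('y \<Rightarrow> 'g) \<Rightarrow> ('x \<times> 'y) set \<Rightarrow> bool" where
  "secured_bij X Y f g \<phi> \<longleftrightarrow> conf X (fst ` \<phi>) \<and> conf Y (snd ` \<phi>) \<and>
     (\<forall>u\<in>\<phi>. \<forall>v\<in>\<phi>. fst u = fst v \<longleftrightarrow> snd u = snd v) \<and>
     (\<forall>u\<in>\<phi>. f (fst u) = g (snd u)) \<and>
     (\<forall>u v. (u, v) \<in> (sec_rel X Y \<phi>)\<^sup>+ \<and> (v, u) \<in> (sec_rel X Y \<phi>)\<^sup>+ \<longrightarrow> u = v)"

definition is_top :: "'x esp \<Rightarrow> 'y esp \<Rightarrow> ('x \<times> 'y) set \<Rightarrow> ('x \<times> 'y) \<Rightarrow> bool" where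
  "is_top X Y \<phi> u \<longleftrightarrow> u \<in> \<phi> \<and> (\<forall>v\<in>\<phi>. (v, u) \<in> (sec_rel X Y \<phi>)\<^sup>*)"

definition top_of :: "'x esp \<Rightarrow> 'y esp \<Rightarrow> ('x \<times> 'y) set \<Rightarrow> ('x \<times> 'y)" where
  "top_of X Y \<phi> = (THE u. is_top X Y \<phi> u)"

text \<open>The pullback of f and g in ES: events are prime secured bijections,
  order is inclusion, conflict is incompatibility. (Polarity is irrelevant here.)\<close>
definition interaction :: "'x esp \<Rightarrow> 'y esp \<Rightarrow> ('x \<Rightarrow> 'g) \<Rightarrow> ('y \<Rightarrow> 'g) \<Rightarrow> ('x \<times> 'y) set esp" where
  "interaction X Y f g =
    (let Ev = {\<phi>. secured_bij X Y f g \<phi> \<and> (\<exists>u. is_top X Y \<phi> u)} in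
     \<lparr> events = Ev,
       leq = (\<lambda>\<phi> \<psi>. \<phi> \<in> Ev \<and> \<psi> \<in> Ev \<and> \<phi> \<subseteq> \<psi>),
       conflict = (\<lambda>\<phi> \<psi>. \<phi> \<in> Ev \<and> \<psi> \<in> Ev \<and> \<not> secured_bij X Y f g (\<phi> \<union> \<psi>)),
       pol = (\<lambda>_. False) \<rparr>)"

text \<open>sigma || C and A || tau, both landing in A || (B || C).\<close>
definition sig_par :: "('s \<Rightarrow> 'a + 'b) \<Rightarrow> ('s + 'c) \<Rightarrow> 'a + ('b + 'c)" where
  "sig_par \<sigma> = case_sum (\<lambda>s. case \<sigma> s of Inl a \<Rightarrow> Inl a | Inr b \<Rightarrow> Inr (Inl b)) (\<lambda>c. Inr (Inr c))"

definition par_tau :: "('t \<Rightarrow> 'b + 'c) \<Rightarrow> ('a + 't) \<Rightarrow> 'a + ('b + 'c)" where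
  "par_tau \<tau> = case_sum Inl (\<lambda>t. Inr (\<tau> t))"

text \<open>Composition tau \<odot> sigma: the pullback (S || C) * (A || T) projected to the events
  not mapped to B, with polarity inherited from A^perp || C.\<close>
definition comp_es :: "'a esp \<Rightarrow> 'b esp \<Rightarrow> 'c esp \<Rightarrow> 's esp \<Rightarrow> 't esp \<Rightarrow>
    ('s \<Rightarrow> 'a + 'b) \<Rightarrow> ('t \<Rightarrow> 'b + 'c) \<Rightarrow> (('s + 'c) \<times> ('a + 't)) set esp" where
  "comp_es A B C S T \<sigma> \<tau> =
    (let X = par S C; Y = par A T;
         P = interaction X Y (sig_par \<sigma>) (par_tau \<tau>);
         lab = (\<lambda>\<phi>. sig_par \<sigma> (fst (top_of X Y \<phi>)));
         V = {\<phi> \<in> events P. \<forall>b. lab \<phi> \<noteq> Inr (Inl b)} in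
     \<lparr> events = V,
       leq = (\<lambda>\<phi> \<psi>. \<phi> \<in> V \<and> \<psi> \<in> V \<and> leq P \<phi> \<psi>),
       conflict = (\<lambda>\<phi> \<psi>. \<phi> \<in> V \<and> \<psi> \<in> V \<and> conflict P \<phi> \<psi>),
       pol = (\<lambda>\<phi>. case lab \<phi> of Inl a \<Rightarrow> \<not> pol A a | Inr (Inr c) \<Rightarrow> pol C c | Inr (Inl b) \<Rightarrow> False) \<rparr>)"

definition comp_map :: "'a esp \<Rightarrow> 'b esp \<Rightarrow> 'c esp \<Rightarrow> 's esp \<Rightarrow> 't esp \<Rightarrow>
    ('s \<Rightarrow> 'a + 'b) \<Rightarrow> ('t \<Rightarrow> 'b + 'c) \<Rightarrow> (('s + 'c) \<times> ('a + 't)) set \<Rightarrow> 'a + 'c" where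
  "comp_map A B C S T \<sigma> \<tau> \<phi> =
    (case sig_par \<sigma> (fst (top_of (par S C) (par A T) \<phi>)) of
       Inl a \<Rightarrow> Inl a | Inr (Inr c) \<Rightarrow> Inr c | Inr (Inl b) \<Rightarrow> undefined)"

end

theory Submission
  imports Defs
begin

lemma par_simps[simp]:
  "events (par E F) = Inl ` events E \<union> Inr ` events F"
  "leq (par E F) (Inl a) (Inl a') = leq E a a'"
  "leq (par E F) (Inr b) (Inr b') = leq F b b'"
  "leq (par E F) (Inl a) (Inr b) = False"
  "leq (par E F) (Inr b) (Inl a) = False"
  "conflict (par E F) (Inl a) (Inl a') = conflict E a a'"
  "conflict (par E F) (Inr b) (Inr b') = conflict F b b'"
  "conflict (par E F) (Inl a) (Inr b) = False"
  "conflict (par E F) (Inr b) (Inl a) = False"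
  "pol (par E F) (Inl a) = pol E a"
  "pol (par E F) (Inr b) = pol F b"
  by (simp_all add: par_def)

lemma dual_simps[simp]: "events (dual A) = events A" "leq (dual A) = leq A"
  "conflict (dual A) = conflict A" "pol (dual A) e = (\<not> pol A e)"
  by (simp_all add: dual_def)

lemma sig_par_simps[simp]: "sig_par \<sigma> (Inr c) = Inr (Inr c)"
  "\<sigma> s = Inl a \<Longrightarrow> sig_par \<sigma> (Inl s) = Inl a"
  "\<sigma> s = Inr b \<Longrightarrow> sig_par \<sigma> (Inl s) = Inr (Inl b)"
  "par_tau \<tau> (Inl a) = Inl a" "par_tau \<tau> (Inr t) = Inr (\<tau> t)"
  by (simp_all add: sig_par_def par_tau_def)

lemma leq_par_Inl: "leq (par E F) z (Inl a) \<Longrightarrow> \<exists>z'. z = Inl z' \<and> leq E z' a"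
  by (cases z) auto
lemma leq_par_Inr: "leq (par E F) z (Inr a) \<Longrightarrow> \<exists>z'. z = Inr z' \<and> leq F z' a"
  by (cases z) auto

lemma conf_down: assumes "is_es E" "e \<in> events E" shows "conf E {z. leq E z e}"
proof -
  have fin: "finite {z. leq E z e}" using assms unfolding is_es_def by blast
  show ?thesis unfolding conf_def
  proof (intro conjI ballI allI impI)
    show "finite {z. leq E z e}" by (rule fin)
    show "{z. leq E z e} \<subseteq> events E" using assms(1) unfolding is_es_def by blast
  next
    fix z z' assume "z \<in> {z. leq E z e}" "leq E z' z" then show "z' \<in> {z. leq E z e}"
      using assms(1) unfolding is_es_def by blast
  next
    fix z z' assume a: "z \<in> {z. leq E z e}" "z' \<in> {z. leq E z e}"
    show "\<not> conflict E z z'"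
    proof
      assume "conflict E z z'"
      then have "conflict E z e" using a assms(1) unfolding is_es_def by blast
      then have "conflict E e z" using assms(1) unfolding is_es_def by blast
      then have "conflict E e e" using a assms(1) unfolding is_es_def by blast
      then show False using assms(1) unfolding is_es_def by blast
    qed
  qed
qed

lemma L_down: assumes "is_es E" "es_map E G h" "e \<in> events E" "leq G a (h e)"
  shows "\<exists>e'. leq E e' e \<and> h e' = a"
proof -
  have c: "conf G (h ` {z. leq E z e})" using assms(2) conf_down[OF assms(1,3)] unfolding es_map_def by blast
  have "leq E e e" using assms(1,3) unfolding is_es_def by blast
  then have "h e \<in> h ` {z. leq E z e}" by blast
  then have "a \<in> h ` {z. leq E z e}" using c assms(4) unfolding conf_def by blast
  then show ?thesis by blast
qed

definition pdom :: "'e esp \<Rightarrow> bool" where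
  "pdom E \<longleftrightarrow> (\<forall>e\<in>events E. (\<exists>z. leq E z e \<and> z \<noteq> e) \<longrightarrow>
     (\<exists>p. leq E p e \<and> p \<noteq> e \<and> (\<forall>z. leq E z e \<and> z \<noteq> e \<longrightarrow> leq E z p)))"

lemma max_exists:
  assumes "finite D" "D \<noteq> {}" "\<forall>z1\<in>D. \<forall>z2\<in>D. r z1 z2 \<or> r z2 z1"
    and tr: "\<forall>x y z. r x y \<and> r y z \<longrightarrow> r x z"
  shows "\<exists>m\<in>D. \<forall>z\<in>D. r z m"
  using assms(1,2,3)
proof (induction D rule: finite_ne_induct)
  case (singleton x)
  have "r x x" using singleton by blast
  then show ?case by blast
next
  case (insert x F)
  have "\<forall>z1\<in>F. \<forall>z2\<in>F. r z1 z2 \<or> r z2 z1" using insert.prems by blast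
  then obtain m where m: "m \<in> F" "\<forall>z\<in>F. r z m" using insert.IH by blast
  have xm: "r x m \<or> r m x" using insert.prems m(1) by blast
  have xx: "r x x" using insert.prems by blast
  show ?case
  proof (cases "r x m")
    case True then show ?thesis using m by auto
  next
    case False
    then have "r m x" using xm by blast
    then have "\<forall>z\<in>F. r z x" using m(2) tr by blast
    then show ?thesis using xx by auto
  qed
qed

lemma pdom_bs:
  assumes "is_es E" "\<forall>e\<in>events E. \<forall>e1 e2. leq E e1 e \<and> leq E e2 e \<longrightarrow> leq E e1 e2 \<or> leq E e2 e1"
  shows "pdom E"
  unfolding pdom_def
proof (intro ballI impI)
  fix e assume e: "e \<in> events E" "\<exists>z. leq E z e \<and> z \<noteq> e"
  let ?D = "{z. leq E z e \<and> z \<noteq> e}"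
  have "finite ?D" using assms(1) e(1) unfolding is_es_def
    by (metis (no_types, lifting) mem_Collect_eq rev_finite_subset subsetI)
  moreover have "?D \<noteq> {}" using e by auto
  moreover have "\<forall>z1\<in>?D. \<forall>z2\<in>?D. leq E z1 z2 \<or> leq E z2 z1" using assms e by blast
  moreover have "\<forall>x y z. leq E x y \<and> leq E y z \<longrightarrow> leq E x z" using assms(1) unfolding is_es_def by blast
  ultimately obtain m where "m \<in> ?D" "\<forall>z\<in>?D. leq E z m" by (rule max_exists[elim_format]) blast
  then show "\<exists>p. leq E p e \<and> p \<noteq> e \<and> (\<forall>z. leq E z e \<and> z \<noteq> e \<longrightarrow> leq E z p)" by blast
qed

lemma pdom_par: assumes "pdom E" "pdom F" shows "pdom (par E F)"
  unfolding pdom_def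
proof (intro ballI impI)
  fix e assume e: "e \<in> events (par E F)" "\<exists>z. leq (par E F) z e \<and> z \<noteq> e"
  show "\<exists>p. leq (par E F) p e \<and> p \<noteq> e \<and> (\<forall>z. leq (par E F) z e \<and> z \<noteq> e \<longrightarrow> leq (par E F) z p)"
  proof (cases e)
    case (Inl a)
    have "a \<in> events E" using e Inl by auto
    moreover have "\<exists>z. leq E z a \<and> z \<noteq> a"
    proof -
      obtain z where z: "leq (par E F) z e" "z \<noteq> e" using e by blast
      have lz: "leq (par E F) z (Inl a)" using Inl z by simp
      from leq_par_Inl[OF lz] obtain z' where "z = Inl z'" "leq E z' a" by blast
      then show ?thesis using z Inl by blast
    qed
    ultimately obtain p where p: "leq E p a" "p \<noteq> a" "\<forall>z. leq E z a \<and> z \<noteq> a \<longrightarrow> leq E z p"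
      using assms(1) unfolding pdom_def by blast
    have "\<forall>z. leq (par E F) z e \<and> z \<noteq> e \<longrightarrow> leq (par E F) z (Inl p)"
    proof (intro allI impI)
      fix z assume z: "leq (par E F) z e \<and> z \<noteq> e"
      have lz: "leq (par E F) z (Inl a)" using Inl z by simp
      from leq_par_Inl[OF lz] obtain z' where z': "z = Inl z'" "leq E z' a" by blast
      then have "z' \<noteq> a" using z Inl by blast
      then show "leq (par E F) z (Inl p)" using z' p by simp
    qed
    moreover have "leq (par E F) (Inl p) e" "Inl p \<noteq> e" using p Inl by simp_all
    ultimately show ?thesis by blast
  next
    case (Inr a)
    have "a \<in> events F" using e Inr by auto
    moreover have "\<exists>z. leq F z a \<and> z \<noteq> a"
    proof -
      obtain z where z: "leq (par E F) z e" "z \<noteq> e" using e by blast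
      have lz: "leq (par E F) z (Inr a)" using Inr z by simp
      from leq_par_Inr[OF lz] obtain z' where "z = Inr z'" "leq F z' a" by blast
      then show ?thesis using z Inr by blast
    qed
    ultimately obtain p where p: "leq F p a" "p \<noteq> a" "\<forall>z. leq F z a \<and> z \<noteq> a \<longrightarrow> leq F z p"
      using assms(2) unfolding pdom_def by blast
    have "\<forall>z. leq (par E F) z e \<and> z \<noteq> e \<longrightarrow> leq (par E F) z (Inr p)"
    proof (intro allI impI)
      fix z assume z: "leq (par E F) z e \<and> z \<noteq> e"
      have lz: "leq (par E F) z (Inr a)" using Inr z by simp
      from leq_par_Inr[OF lz] obtain z' where z': "z = Inr z'" "leq F z' a" by blast
      then have "z' \<noteq> a" using z Inr by blast
      then show "leq (par E F) z (Inr p)" using z' p by simp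
    qed
    moreover have "leq (par E F) (Inr p) e" "Inr p \<noteq> e" using p Inr by simp_all
    ultimately show ?thesis by blast
  qed
qed

lemma inj_sig_par:
  assumes "es_map S G \<sigma>" "conf (par S C) x"
  shows "inj_on (sig_par \<sigma>) x"
proof -
  let ?xs = "{s. Inl s \<in> x}"
  have "conf S ?xs" unfolding conf_def
  proof (intro conjI ballI allI impI)
    have "finite x" using assms(2) unfolding conf_def by blast
    then show "finite ?xs" using finite_vimageI[of x Inl] by (simp add: vimage_def)
    show "?xs \<subseteq> events S" using assms(2) unfolding conf_def by auto
  next
    fix e e' assume "e \<in> ?xs" "leq S e' e" then show "e' \<in> ?xs"
      using assms(2) unfolding conf_def by (metis mem_Collect_eq par_simps(2))
  next
    fix e e' assume "e \<in> ?xs" "e' \<in> ?xs" then show "\<not> conflict S e e'"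
      using assms(2) unfolding conf_def by (metis mem_Collect_eq par_simps(6))
  qed
  then have inj: "inj_on \<sigma> ?xs" using assms(1) unfolding es_map_def by blast
  show ?thesis
  proof (rule inj_onI)
    fix u v assume uv: "u \<in> x" "v \<in> x" "sig_par \<sigma> u = sig_par \<sigma> v"
    show "u = v"
    proof (cases u; cases v)
      fix s s' assume "u = Inl s" "v = Inl s'"
      then have "\<sigma> s = \<sigma> s'" using uv
        by (cases "\<sigma> s"; cases "\<sigma> s'") auto
      then show "u = v" using inj uv \<open>u = Inl s\<close> \<open>v = Inl s'\<close> by (simp add: inj_on_def)
    next
      fix s c assume "u = Inl s" "v = Inr c" then show "u = v" using uv
        by (cases "\<sigma> s") auto
    next
      fix s c assume "u = Inr c" "v = Inl s" then show "u = v" using uv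
        by (cases "\<sigma> s") auto
    next
      fix c c' assume "u = Inr c" "v = Inr c'" then show "u = v" using uv by auto
    qed
  qed
qed


lemma imm_parent:
  assumes "is_es E" "leq E p e" "p \<noteq> e" "\<forall>z. leq E z e \<and> z \<noteq> e \<longrightarrow> leq E z p"
  shows "imm E p e"
  using assms unfolding imm_def is_es_def by blast

locale cs =
  fixes A :: "'a esp" and B :: "'b esp" and C :: "'c esp"
    and S :: "'s esp" and T :: "'t esp"
    and \<sigma> :: "'s \<Rightarrow> 'a + 'b" and \<tau> :: "'t \<Rightarrow> 'b + 'c"
  assumes aA: "arena A" and aB: "arena B" and aC: "arena C"
    and sS: "strategy S (par (dual A) B) \<sigma>" and bS: "backward_sequential S"
    and sT: "strategy T (par (dual B) C) \<tau>" and bT: "backward_sequential T"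
begin

lemma esS: "is_es S" using sS unfolding strategy_def by blast
lemma esT: "is_es T" using sT unfolding strategy_def by blast
lemma emS: "es_map S (par (dual A) B) \<sigma>" using sS unfolding strategy_def esp_map_def by blast
lemma emT: "es_map T (par (dual B) C) \<tau>" using sT unfolding strategy_def esp_map_def by blast
lemma polS: "e \<in> events S \<Longrightarrow> pol (par (dual A) B) (\<sigma> e) = pol S e"
  using sS unfolding strategy_def esp_map_def by blast
lemma polT: "e \<in> events T \<Longrightarrow> pol (par (dual B) C) (\<tau> e) = pol T e"
  using sT unfolding strategy_def esp_map_def by blast
lemma courtS: "imm S s1 s2 \<Longrightarrow> \<not> pol S s2 \<Longrightarrow> imm (par (dual A) B) (\<sigma> s1) (\<sigma> s2)"
  using sS unfolding strategy_def courteous_def by blast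
lemma courtT: "imm T s1 s2 \<Longrightarrow> \<not> pol T s2 \<Longrightarrow> imm (par (dual B) C) (\<tau> s1) (\<tau> s2)"
  using sT unfolding strategy_def courteous_def by blast

lemma pdomX: "pdom (par S C)"
  apply (rule pdom_par)
   apply (rule pdom_bs[OF esS]) using bS unfolding backward_sequential_def apply blast
  apply (rule pdom_bs) using aC unfolding arena_def by blast+

lemma pdomY: "pdom (par A T)"
  apply (rule pdom_par)
   apply (rule pdom_bs) using aA unfolding arena_def apply blast+
  apply (rule pdom_bs[OF esT]) using bT unfolding backward_sequential_def by blast

end

locale csp = cs +
  fixes \<phi> :: "(('s + 'c) \<times> ('a + 't)) set"
  assumes sb: "secured_bij (par S C) (par A T) (sig_par \<sigma>) (par_tau \<tau>) \<phi>"
begin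

abbreviation "R \<equiv> sec_rel (par S C) (par A T) \<phi>"

lemma confX: "conf (par S C) (fst ` \<phi>)" using sb unfolding secured_bij_def by blast
lemma confY: "conf (par A T) (snd ` \<phi>)" using sb unfolding secured_bij_def by blast
lemma bijp: "u \<in> \<phi> \<Longrightarrow> v \<in> \<phi> \<Longrightarrow> fst u = fst v \<longleftrightarrow> snd u = snd v"
  using sb unfolding secured_bij_def by blast
lemma labp: "u \<in> \<phi> \<Longrightarrow> sig_par \<sigma> (fst u) = par_tau \<tau> (snd u)"
  using sb unfolding secured_bij_def by blast
lemma antip: "(u, v) \<in> R\<^sup>+ \<Longrightarrow> (v, u) \<in> R\<^sup>+ \<Longrightarrow> u = v"
  using sb unfolding secured_bij_def by blast

lemma eq_fst: "u \<in> \<phi> \<Longrightarrow> v \<in> \<phi> \<Longrightarrow> fst u = fst v \<Longrightarrow> u = v"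
  using bijp by (simp add: prod_eq_iff)
lemma eq_snd: "u \<in> \<phi> \<Longrightarrow> v \<in> \<phi> \<Longrightarrow> snd u = snd v \<Longrightarrow> u = v"
  using bijp by (simp add: prod_eq_iff)
lemma eq_lab: "u \<in> \<phi> \<Longrightarrow> v \<in> \<phi> \<Longrightarrow> sig_par \<sigma> (fst u) = sig_par \<sigma> (fst v) \<Longrightarrow> u = v"
  using inj_sig_par[OF emS confX] eq_fst by (meson image_eqI inj_on_def)

lemma fst_down: "u \<in> \<phi> \<Longrightarrow> leq (par S C) x' (fst u) \<Longrightarrow> \<exists>v\<in>\<phi>. fst v = x'"
  using confX unfolding conf_def by (metis image_eqI image_iff)
lemma snd_down: "u \<in> \<phi> \<Longrightarrow> leq (par A T) y' (snd u) \<Longrightarrow> \<exists>v\<in>\<phi>. snd v = y'"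
  using confY unfolding conf_def by (metis image_eqI image_iff)
lemma fst_ev: "u \<in> \<phi> \<Longrightarrow> fst u \<in> events (par S C)"
  using confX unfolding conf_def by blast
lemma snd_ev: "u \<in> \<phi> \<Longrightarrow> snd u \<in> events (par A T)"
  using confY unfolding conf_def by blast

lemma R_iff: "(v, w) \<in> R \<longleftrightarrow> v \<in> \<phi> \<and> w \<in> \<phi> \<and>
    (leq (par S C) (fst v) (fst w) \<or> leq (par A T) (snd v) (snd w))"
  unfolding sec_rel_def by auto

lemma HS: assumes "w \<in> \<phi>" "fst w = Inl s" "leq (par (dual A) B) \<gamma> (\<sigma> s)"
  shows "\<exists>v s'. v \<in> \<phi> \<and> fst v = Inl s' \<and> leq S s' s \<and> \<sigma> s' = \<gamma>"
proof -
  have "s \<in> events S" using fst_ev[OF assms(1)] assms(2) by auto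
  then obtain s' where s': "leq S s' s" "\<sigma> s' = \<gamma>" using L_down[OF esS emS _ assms(3)] by blast
  then have "leq (par S C) (Inl s') (fst w)" using assms(2) by simp
  then obtain v where "v \<in> \<phi>" "fst v = Inl s'" using fst_down[OF assms(1)] by blast
  then show ?thesis using s' by blast
qed

lemma HT: assumes "w \<in> \<phi>" "snd w = Inr t" "leq (par (dual B) C) \<gamma> (\<tau> t)"
  shows "\<exists>v t'. v \<in> \<phi> \<and> snd v = Inr t' \<and> leq T t' t \<and> \<tau> t' = \<gamma>"
proof -
  have "t \<in> events T" using snd_ev[OF assms(1)] assms(2) by auto
  then obtain t' where t': "leq T t' t" "\<tau> t' = \<gamma>" using L_down[OF esT emT _ assms(3)] by blast
  then have "leq (par A T) (Inr t') (snd w)" using assms(2) by simp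
  then obtain v where "v \<in> \<phi>" "snd v = Inr t'" using snd_down[OF assms(1)] by blast
  then show ?thesis using t' by blast
qed

lemma crux:
  assumes w: "w \<in> \<phi>" and wx: "wx \<in> \<phi>" and wy: "wy \<in> \<phi>"
    and x1: "leq (par S C) (fst wx) (fst w)" and x2: "fst wx \<noteq> fst w"
    and x3: "\<forall>z. leq (par S C) z (fst w) \<and> z \<noteq> fst w \<longrightarrow> leq (par S C) z (fst wx)"
    and y1: "leq (par A T) (snd wy) (snd w)" and y2: "snd wy \<noteq> snd w"
    and y3: "\<forall>z. leq (par A T) z (snd w) \<and> z \<noteq> snd w \<longrightarrow> leq (par A T) z (snd wy)"
  shows "(wx, wy) \<in> R \<or> (wy, wx) \<in> R"
proof (cases "fst w")
  case (Inr c)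
  have lw: "par_tau \<tau> (snd w) = Inr (Inr c)" using labp[OF w] Inr by simp
  obtain t where yt: "snd w = Inr t" "\<tau> t = Inr c"
    using lw by (cases "snd w") auto
  obtain c1 where c1': "fst wx = Inr c1" "leq C c1 c"
    using x1 Inr leq_par_Inr by (metis par_simps(3))
  have c1: "fst wx = Inr c1" "leq C c1 c" "c1 \<noteq> c" using c1' x2 Inr by auto
  have "leq (par (dual B) C) (Inr c1) (\<tau> t)" using yt c1 by simp
  then obtain v t' where v: "v \<in> \<phi>" "snd v = Inr t'" "leq T t' t" "\<tau> t' = Inr c1"
    using HT[OF w yt(1)] by blast
  have "sig_par \<sigma> (fst v) = sig_par \<sigma> (fst wx)" using labp[OF v(1)] v c1 by simp
  then have "v = wx" using eq_lab v(1) wx by blast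
  moreover have "t' \<noteq> t" using v(4) yt(2) c1(3) by auto
  ultimately have "leq (par A T) (snd wx) (snd w) \<and> snd wx \<noteq> snd w" using v yt by simp
  then have "leq (par A T) (snd wx) (snd wy)" using y3 by blast
  then show ?thesis using wx wy R_iff by blast
next
  case (Inl s)
  have ses: "s \<in> events S" using fst_ev[OF w] Inl by auto
  show ?thesis
  proof (cases "\<sigma> s")
    case (Inl a)
    have lw: "par_tau \<tau> (snd w) = Inl a" using labp[OF w] \<open>fst w = Inl s\<close> Inl by simp
    have ya: "snd w = Inl a" using lw by (cases "snd w") auto
    obtain a1 where a1': "snd wy = Inl a1" "leq A a1 a"
      using y1 ya leq_par_Inl by (metis par_simps(2))
    have a1: "snd wy = Inl a1" "leq A a1 a" "a1 \<noteq> a" using a1' y2 ya by auto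
    have "leq (par (dual A) B) (Inl a1) (\<sigma> s)" using Inl a1 by simp
    then obtain v s' where v: "v \<in> \<phi>" "fst v = Inl s'" "leq S s' s" "\<sigma> s' = Inl a1"
      using HS[OF w \<open>fst w = Inl s\<close>] by blast
    have "sig_par \<sigma> (fst v) = sig_par \<sigma> (fst wy)" using labp[OF wy] v a1 by simp
    then have "v = wy" using eq_lab v(1) wy by blast
    moreover have "s' \<noteq> s" using v(4) Inl a1(3) by auto
    ultimately have "leq (par S C) (fst wy) (fst w) \<and> fst wy \<noteq> fst w" using v \<open>fst w = Inl s\<close> by simp
    then have "leq (par S C) (fst wy) (fst wx)" using x3 by blast
    then show ?thesis using wx wy R_iff by blast
  next
    case (Inr b)
    have lw: "par_tau \<tau> (snd w) = Inr (Inl b)" using labp[OF w] \<open>fst w = Inl s\<close> Inr by simp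
    obtain t where yt: "snd w = Inr t" "\<tau> t = Inl b"
      using lw by (cases "snd w") auto
    have tes: "t \<in> events T" using snd_ev[OF w] yt by auto
    show ?thesis
    proof (cases "pol B b")
      case False
      obtain s1 where s1': "fst wx = Inl s1" "leq S s1 s"
        using x1 \<open>fst w = Inl s\<close> leq_par_Inl by (metis par_simps(2))
      have s1: "fst wx = Inl s1" "leq S s1 s" "s1 \<noteq> s" using s1' x2 \<open>fst w = Inl s\<close> by auto
      have dom: "\<forall>z. leq S z s \<and> z \<noteq> s \<longrightarrow> leq S z s1"
      proof (intro allI impI)
        fix z assume "leq S z s \<and> z \<noteq> s"
        then have "leq (par S C) (Inl z) (fst w) \<and> Inl z \<noteq> fst w" using \<open>fst w = Inl s\<close> by simp
        then have "leq (par S C) (Inl z) (Inl s1)" using x3 s1 by metis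
        then show "leq S z s1" by simp
      qed
      have "imm S s1 s" using imm_parent[OF esS s1(2,3) dom] .
      moreover have "\<not> pol S s" using polS[OF ses] Inr False by simp
      ultimately have im: "imm (par (dual A) B) (\<sigma> s1) (\<sigma> s)" by (rule courtS)
      then have "leq (par (dual A) B) (\<sigma> s1) (Inr b)" "\<sigma> s1 \<noteq> Inr b"
        using Inr unfolding imm_def by auto
      then obtain b1 where b1: "\<sigma> s1 = Inr b1" "leq B b1 b" "b1 \<noteq> b"
        using leq_par_Inr by (metis par_simps(3))
      have "leq (par (dual B) C) (Inl b1) (\<tau> t)" using yt b1 by simp
      then obtain v t' where v: "v \<in> \<phi>" "snd v = Inr t'" "leq T t' t" "\<tau> t' = Inl b1"
        using HT[OF w yt(1)] by blast
      have "sig_par \<sigma> (fst v) = sig_par \<sigma> (fst wx)" using labp[OF v(1)] v s1 b1 by simp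
      then have "v = wx" using eq_lab v(1) wx by blast
      moreover have "t' \<noteq> t" using v(4) yt(2) b1(3) by auto
      ultimately have "leq (par A T) (snd wx) (snd w) \<and> snd wx \<noteq> snd w" using v yt by simp
      then have "leq (par A T) (snd wx) (snd wy)" using y3 by blast
      then show ?thesis using wx wy R_iff by blast
    next
      case True
      obtain t1 where t1': "snd wy = Inr t1" "leq T t1 t"
        using y1 yt leq_par_Inr by (metis par_simps(3))
      have t1: "snd wy = Inr t1" "leq T t1 t" "t1 \<noteq> t" using t1' y2 yt by auto
      have dom: "\<forall>z. leq T z t \<and> z \<noteq> t \<longrightarrow> leq T z t1"
      proof (intro allI impI)
        fix z assume "leq T z t \<and> z \<noteq> t"
        then have "leq (par A T) (Inr z) (snd w) \<and> Inr z \<noteq> snd w" using yt by simp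
        then have "leq (par A T) (Inr z) (Inr t1)" using y3 t1 by metis
        then show "leq T z t1" by simp
      qed
      have "imm T t1 t" using imm_parent[OF esT t1(2,3) dom] .
      moreover have "\<not> pol T t" using polT[OF tes] yt True by simp
      ultimately have im: "imm (par (dual B) C) (\<tau> t1) (\<tau> t)" by (rule courtT)
      then have "leq (par (dual B) C) (\<tau> t1) (Inl b)" "\<tau> t1 \<noteq> Inl b"
        using yt unfolding imm_def by auto
      then obtain b1 where b1: "\<tau> t1 = Inl b1" "leq B b1 b" "b1 \<noteq> b"
        using leq_par_Inl by (metis dual_simps(2) par_simps(2))
      have "leq (par (dual A) B) (Inr b1) (\<sigma> s)" using Inr b1 by simp
      then obtain v s' where v: "v \<in> \<phi>" "fst v = Inl s'" "leq S s' s" "\<sigma> s' = Inr b1"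
        using HS[OF w \<open>fst w = Inl s\<close>] by blast
      have "sig_par \<sigma> (fst v) = sig_par \<sigma> (fst wy)" using labp[OF wy] v t1 b1 by simp
      then have "v = wy" using eq_lab v(1) wy by blast
      moreover have "s' \<noteq> s" using v(4) Inr b1(3) by auto
      ultimately have "leq (par S C) (fst wy) (fst w) \<and> fst wy \<noteq> fst w" using v \<open>fst w = Inl s\<close> by simp
      then have "leq (par S C) (fst wy) (fst wx)" using x3 by blast
      then show ?thesis using wx wy R_iff by blast
    qed
  qed
qed

lemma vcase: "(v, w) \<in> R \<Longrightarrow> v \<noteq> w \<Longrightarrow>
   (leq (par S C) (fst v) (fst w) \<and> fst v \<noteq> fst w) \<or> (leq (par A T) (snd v) (snd w) \<and> snd v \<noteq> snd w)"
  using R_iff eq_fst eq_snd by blast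

lemma hX: assumes w: "w \<in> \<phi>" and h: "\<exists>z. leq (par S C) z (fst w) \<and> z \<noteq> fst w"
  shows "\<exists>wx\<in>\<phi>. leq (par S C) (fst wx) (fst w) \<and> fst wx \<noteq> fst w \<and>
           (\<forall>z. leq (par S C) z (fst w) \<and> z \<noteq> fst w \<longrightarrow> leq (par S C) z (fst wx))"
proof -
  obtain p where p: "leq (par S C) p (fst w)" "p \<noteq> fst w"
     "\<forall>z. leq (par S C) z (fst w) \<and> z \<noteq> fst w \<longrightarrow> leq (par S C) z p"
    using pdomX fst_ev[OF w] h unfolding pdom_def by blast
  obtain wx where "wx \<in> \<phi>" "fst wx = p" using fst_down[OF w p(1)] by blast
  then show ?thesis using p by blast
qed

lemma hY: assumes w: "w \<in> \<phi>" and h: "\<exists>z. leq (par A T) z (snd w) \<and> z \<noteq> snd w"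
  shows "\<exists>wy\<in>\<phi>. leq (par A T) (snd wy) (snd w) \<and> snd wy \<noteq> snd w \<and>
           (\<forall>z. leq (par A T) z (snd w) \<and> z \<noteq> snd w \<longrightarrow> leq (par A T) z (snd wy))"
proof -
  obtain p where p: "leq (par A T) p (snd w)" "p \<noteq> snd w"
     "\<forall>z. leq (par A T) z (snd w) \<and> z \<noteq> snd w \<longrightarrow> leq (par A T) z p"
    using pdomY snd_ev[OF w] h unfolding pdom_def by blast
  obtain wy where "wy \<in> \<phi>" "snd wy = p" using snd_down[OF w p(1)] by blast
  then show ?thesis using p by blast
qed

lemma dec: assumes w: "w \<in> \<phi>"
  shows "(\<forall>v. (v, w) \<in> R \<longrightarrow> v = w) \<or>
         (\<exists>w1. (w1, w) \<in> R \<and> w1 \<noteq> w \<and> (\<forall>v. (v, w) \<in> R \<and> v \<noteq> w \<longrightarrow> (v, w1) \<in> R\<^sup>*))"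
proof (cases "\<exists>z. leq (par S C) z (fst w) \<and> z \<noteq> fst w")
  case hx: True
  obtain wx where wx: "wx \<in> \<phi>" "leq (par S C) (fst wx) (fst w)" "fst wx \<noteq> fst w"
     "\<forall>z. leq (par S C) z (fst w) \<and> z \<noteq> fst w \<longrightarrow> leq (par S C) z (fst wx)"
    using hX[OF w hx] by blast
  have wxw: "(wx, w) \<in> R" "wx \<noteq> w" using wx w R_iff by auto
  have dx: "\<And>v. (v, w) \<in> R \<Longrightarrow> leq (par S C) (fst v) (fst w) \<Longrightarrow> fst v \<noteq> fst w \<Longrightarrow> (v, wx) \<in> R"
    using wx R_iff by blast
  show ?thesis
  proof (cases "\<exists>z. leq (par A T) z (snd w) \<and> z \<noteq> snd w")
    case hy: True
    obtain wy where wy: "wy \<in> \<phi>" "leq (par A T) (snd wy) (snd w)" "snd wy \<noteq> snd w"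
       "\<forall>z. leq (par A T) z (snd w) \<and> z \<noteq> snd w \<longrightarrow> leq (par A T) z (snd wy)"
      using hY[OF w hy] by blast
    have wyw: "(wy, w) \<in> R" "wy \<noteq> w" using wy w R_iff by auto
    have dy: "\<And>v. (v, w) \<in> R \<Longrightarrow> leq (par A T) (snd v) (snd w) \<Longrightarrow> snd v \<noteq> snd w \<Longrightarrow> (v, wy) \<in> R"
      using wy R_iff by blast
    have "(wx, wy) \<in> R \<or> (wy, wx) \<in> R" using crux[OF w wx(1) wy(1) wx(2-4) wy(2-4)] .
    then show ?thesis
    proof
      assume c: "(wx, wy) \<in> R"
      have "\<forall>v. (v, w) \<in> R \<and> v \<noteq> w \<longrightarrow> (v, wy) \<in> R\<^sup>*"
      proof (intro allI impI)
        fix v assume v: "(v, w) \<in> R \<and> v \<noteq> w"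
        from vcase[OF conjunct1[OF v] conjunct2[OF v]] show "(v, wy) \<in> R\<^sup>*"
        proof (elim disjE conjE)
          assume "leq (par S C) (fst v) (fst w)" "fst v \<noteq> fst w"
          then have "(v, wx) \<in> R" using dx v by blast
          then show ?thesis using c by (meson r_into_rtrancl rtrancl_into_rtrancl)
        next
          assume "leq (par A T) (snd v) (snd w)" "snd v \<noteq> snd w"
          then show ?thesis using dy v by blast
        qed
      qed
      then show ?thesis using wyw by blast
    next
      assume c: "(wy, wx) \<in> R"
      have "\<forall>v. (v, w) \<in> R \<and> v \<noteq> w \<longrightarrow> (v, wx) \<in> R\<^sup>*"
      proof (intro allI impI)
        fix v assume v: "(v, w) \<in> R \<and> v \<noteq> w"
        from vcase[OF conjunct1[OF v] conjunct2[OF v]] show "(v, wx) \<in> R\<^sup>*"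
        proof (elim disjE conjE)
          assume "leq (par S C) (fst v) (fst w)" "fst v \<noteq> fst w"
          then show ?thesis using dx v by blast
        next
          assume "leq (par A T) (snd v) (snd w)" "snd v \<noteq> snd w"
          then have "(v, wy) \<in> R" using dy v by blast
          then show ?thesis using c by (meson r_into_rtrancl rtrancl_into_rtrancl)
        qed
      qed
      then show ?thesis using wxw by blast
    qed
  next
    case hy: False
    have "\<forall>v. (v, w) \<in> R \<and> v \<noteq> w \<longrightarrow> (v, wx) \<in> R\<^sup>*"
    proof (intro allI impI)
      fix v assume v: "(v, w) \<in> R \<and> v \<noteq> w"
      from vcase[OF conjunct1[OF v] conjunct2[OF v]] show "(v, wx) \<in> R\<^sup>*"
      proof (elim disjE conjE)
        assume "leq (par S C) (fst v) (fst w)" "fst v \<noteq> fst w"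
        then show ?thesis using dx v by blast
      next
        assume "leq (par A T) (snd v) (snd w)" "snd v \<noteq> snd w"
        then show ?thesis using hy by blast
      qed
    qed
    then show ?thesis using wxw by blast
  qed
next
  case hx: False
  show ?thesis
  proof (cases "\<exists>z. leq (par A T) z (snd w) \<and> z \<noteq> snd w")
    case hy: True
    obtain wy where wy: "wy \<in> \<phi>" "leq (par A T) (snd wy) (snd w)" "snd wy \<noteq> snd w"
       "\<forall>z. leq (par A T) z (snd w) \<and> z \<noteq> snd w \<longrightarrow> leq (par A T) z (snd wy)"
      using hY[OF w hy] by blast
    have wyw: "(wy, w) \<in> R" "wy \<noteq> w" using wy w R_iff by auto
    have "\<forall>v. (v, w) \<in> R \<and> v \<noteq> w \<longrightarrow> (v, wy) \<in> R\<^sup>*"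
    proof (intro allI impI)
      fix v assume v: "(v, w) \<in> R \<and> v \<noteq> w"
      from vcase[OF conjunct1[OF v] conjunct2[OF v]] show "(v, wy) \<in> R\<^sup>*"
      proof (elim disjE conjE)
        assume "leq (par S C) (fst v) (fst w)" "fst v \<noteq> fst w"
        then show ?thesis using hx by blast
      next
        assume "leq (par A T) (snd v) (snd w)" "snd v \<noteq> snd w"
        then have "(v, wy) \<in> R" using wy v R_iff by blast
        then show ?thesis by blast
      qed
    qed
    then show ?thesis using wyw by blast
  next
    case hy: False
    have "\<forall>v. (v, w) \<in> R \<longrightarrow> v = w"
    proof (intro allI impI)
      fix v assume v: "(v, w) \<in> R"
      show "v = w"
      proof (rule ccontr)
        assume "v \<noteq> w"
        from vcase[OF v this] show False using hx hy by blast
      qed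
    qed
    then show ?thesis by blast
  qed
qed

lemma below_w1:
  assumes "(x, w) \<in> R\<^sup>*" "\<forall>v. (v, w) \<in> R \<and> v \<noteq> w \<longrightarrow> (v, w1) \<in> R\<^sup>*"
  shows "x = w \<or> (x, w1) \<in> R\<^sup>*"
  using assms(1)
proof (induction rule: converse_rtrancl_induct)
  case base then show ?case by blast
next
  case (step y z)
  from step.IH show ?case
  proof
    assume "z = w"
    then show ?thesis using step.hyps(1) assms(2) by blast
  next
    assume "(z, w1) \<in> R\<^sup>*"
    then show ?thesis using step.hyps(1) by (meson converse_rtrancl_into_rtrancl)
  qed
qed

lemma below_none:
  assumes "(x, w) \<in> R\<^sup>*" "\<forall>v. (v, w) \<in> R \<longrightarrow> v = w"
  shows "x = w"
  using assms(1)
proof (induction rule: converse_rtrancl_induct)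
  case base then show ?case by blast
next
  case (step y z)
  then show ?case using assms(2) by blast
qed

lemma finite_phi: "finite \<phi>"
proof -
  have "finite (fst ` \<phi>)" using confX unfolding conf_def by blast
  moreover have "inj_on fst \<phi>" using eq_fst by (meson inj_onI)
  ultimately show ?thesis using finite_imageD by blast
qed

definition dn where "dn w = {v. (v, w) \<in> R\<^sup>*}"

lemma dn_sub: "w \<in> \<phi> \<Longrightarrow> dn w \<subseteq> \<phi>"
proof
  fix x assume w: "w \<in> \<phi>" and "x \<in> dn w"
  then have "(x, w) \<in> R\<^sup>*" unfolding dn_def by blast
  then show "x \<in> \<phi>"
  proof (cases rule: converse_rtranclE)
    case base then show ?thesis using w by simp
  next
    case (step y) then show ?thesis using R_iff by blast
  qed
qed

lemma chain: "w \<in> \<phi> \<Longrightarrow> \<forall>v1 v2. (v1, w) \<in> R\<^sup>* \<and> (v2, w) \<in> R\<^sup>* \<longrightarrow> (v1, v2) \<in> R\<^sup>* \<or> (v2, v1) \<in> R\<^sup>*"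
proof (induction "card (dn w)" arbitrary: w rule: less_induct)
  case less
  note w = less.prems
  from dec[OF w] show ?case
  proof
    assume n: "\<forall>v. (v, w) \<in> R \<longrightarrow> v = w"
    show ?thesis using below_none[OF _ n] by blast
  next
    assume "\<exists>w1. (w1, w) \<in> R \<and> w1 \<noteq> w \<and> (\<forall>v. (v, w) \<in> R \<and> v \<noteq> w \<longrightarrow> (v, w1) \<in> R\<^sup>*)"
    then obtain w1 where w1: "(w1, w) \<in> R" "w1 \<noteq> w" "\<forall>v. (v, w) \<in> R \<and> v \<noteq> w \<longrightarrow> (v, w1) \<in> R\<^sup>*"
      by blast
    have w1p: "w1 \<in> \<phi>" using w1(1) R_iff by blast
    have sub: "dn w1 \<subseteq> dn w" unfolding dn_def using w1(1)
      by (auto intro: rtrancl_into_rtrancl)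
    have "w \<notin> dn w1"
    proof
      assume "w \<in> dn w1"
      then have "(w, w1) \<in> R\<^sup>*" unfolding dn_def by blast
      then have "(w, w1) \<in> R\<^sup>+" using w1(2) rtranclD by metis
      moreover have "(w1, w) \<in> R\<^sup>+" using w1(1) by blast
      ultimately show False using antip w1(2) by blast
    qed
    moreover have "w \<in> dn w" unfolding dn_def by blast
    ultimately have "dn w1 \<subset> dn w" using sub by blast
    moreover have "finite (dn w)" using dn_sub[OF w] finite_phi finite_subset by blast
    ultimately have "card (dn w1) < card (dn w)" by (rule psubset_card_mono[rotated])
    then have IH: "\<forall>v1 v2. (v1, w1) \<in> R\<^sup>* \<and> (v2, w1) \<in> R\<^sup>* \<longrightarrow> (v1, v2) \<in> R\<^sup>* \<or> (v2, v1) \<in> R\<^sup>*"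
      using less.hyps w1p by blast
    show ?thesis
    proof (intro allI impI)
      fix v1 v2 assume v: "(v1, w) \<in> R\<^sup>* \<and> (v2, w) \<in> R\<^sup>*"
      have "v1 = w \<or> (v1, w1) \<in> R\<^sup>*" using below_w1 v w1(3) by blast
      moreover have "v2 = w \<or> (v2, w1) \<in> R\<^sup>*" using below_w1 v w1(3) by blast
      ultimately show "(v1, v2) \<in> R\<^sup>* \<or> (v2, v1) \<in> R\<^sup>*" using IH v by blast
    qed
  qed
qed

lemma down_closed:
  assumes psi: "\<psi> \<subseteq> \<phi>" "conf (par S C) (fst ` \<psi>)" "conf (par A T) (snd ` \<psi>)"
    and zz: "(z, z') \<in> R\<^sup>*" "z' \<in> \<psi>"
  shows "z \<in> \<psi>"
  using zz
proof (induction rule: converse_rtrancl_induct)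
  case base then show ?case .
next
  case (step y z)
  then have yz: "y \<in> \<phi>" "z \<in> \<psi>" "leq (par S C) (fst y) (fst z) \<or> leq (par A T) (snd y) (snd z)"
    using R_iff by auto
  from yz(3) show ?case
  proof
    assume "leq (par S C) (fst y) (fst z)"
    then have "fst y \<in> fst ` \<psi>" using psi(2) yz(2) unfolding conf_def by blast
    then obtain y' where "y' \<in> \<psi>" "fst y' = fst y" by auto
    then show ?thesis using eq_fst psi(1) yz(1) by blast
  next
    assume "leq (par A T) (snd y) (snd z)"
    then have "snd y \<in> snd ` \<psi>" using psi(3) yz(2) unfolding conf_def by blast
    then obtain y' where "y' \<in> \<psi>" "snd y' = snd y" by auto
    then show ?thesis using eq_snd psi(1) yz(1) by blast
  qed
qed

lemma prime_sub:
  assumes top: "is_top (par S C) (par A T) \<phi> u"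
    and s1: "secured_bij (par S C) (par A T) (sig_par \<sigma>) (par_tau \<tau>) \<phi>1"
    "is_top (par S C) (par A T) \<phi>1 u1" "\<phi>1 \<subseteq> \<phi>"
    and s2: "secured_bij (par S C) (par A T) (sig_par \<sigma>) (par_tau \<tau>) \<phi>2"
    "is_top (par S C) (par A T) \<phi>2 u2" "\<phi>2 \<subseteq> \<phi>"
  shows "\<phi>1 \<subseteq> \<phi>2 \<or> \<phi>2 \<subseteq> \<phi>1"
proof -
  have m1: "sec_rel (par S C) (par A T) \<phi>1 \<subseteq> R" using s1(3) unfolding sec_rel_def by auto
  have m2: "sec_rel (par S C) (par A T) \<phi>2 \<subseteq> R" using s2(3) unfolding sec_rel_def by auto
  have t1: "u1 \<in> \<phi>1" "\<forall>v\<in>\<phi>1. (v, u1) \<in> R\<^sup>*"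
    using s1(2) rtrancl_mono[OF m1] unfolding is_top_def by blast+
  have t2: "u2 \<in> \<phi>2" "\<forall>v\<in>\<phi>2. (v, u2) \<in> R\<^sup>*"
    using s2(2) rtrancl_mono[OF m2] unfolding is_top_def by blast+
  have tu: "u \<in> \<phi>" "\<forall>v\<in>\<phi>. (v, u) \<in> R\<^sup>*" using top unfolding is_top_def by blast+
  have "(u1, u) \<in> R\<^sup>*" "(u2, u) \<in> R\<^sup>*" using tu t1 t2 s1(3) s2(3) by blast+
  then have "(u1, u2) \<in> R\<^sup>* \<or> (u2, u1) \<in> R\<^sup>*" using chain[OF tu(1)] by blast
  then show ?thesis
  proof
    assume c: "(u1, u2) \<in> R\<^sup>*"
    have "\<phi>1 \<subseteq> \<phi>2"
    proof
      fix v assume "v \<in> \<phi>1"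
      then have "(v, u2) \<in> R\<^sup>*" using t1 c by (meson rtrancl_trans)
      then show "v \<in> \<phi>2" using down_closed[OF s2(3) _ _ _ t2(1)] s2(1)
        unfolding secured_bij_def by blast
    qed
    then show ?thesis by blast
  next
    assume c: "(u2, u1) \<in> R\<^sup>*"
    have "\<phi>2 \<subseteq> \<phi>1"
    proof
      fix v assume "v \<in> \<phi>2"
      then have "(v, u1) \<in> R\<^sup>*" using t2 c by (meson rtrancl_trans)
      then show "v \<in> \<phi>1" using down_closed[OF s1(3) _ _ _ t1(1)] s1(1)
        unfolding secured_bij_def by blast
    qed
    then show ?thesis by blast
  qed
qed

end

lemma comp_leqD:
  assumes "leq (comp_es A B C S T \<sigma> \<tau>) p q"
  shows "p \<in> events (comp_es A B C S T \<sigma> \<tau>) \<and> q \<in> events (comp_es A B C S T \<sigma> \<tau>) \<and> p \<subseteq> q \<and>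
    secured_bij (par S C) (par A T) (sig_par \<sigma>) (par_tau \<tau>) p \<and> (\<exists>u. is_top (par S C) (par A T) p u) \<and>
    secured_bij (par S C) (par A T) (sig_par \<sigma>) (par_tau \<tau>) q \<and> (\<exists>u. is_top (par S C) (par A T) q u)"
  using assms unfolding comp_es_def Let_def interaction_def by auto

lemma comp_leqI:
  assumes "p \<in> events (comp_es A B C S T \<sigma> \<tau>)" "q \<in> events (comp_es A B C S T \<sigma> \<tau>)" "p \<subseteq> q"
  shows "leq (comp_es A B C S T \<sigma> \<tau>) p q"
  using assms unfolding comp_es_def Let_def interaction_def by auto

theorem mainTheorem6:
  fixes A :: "'a esp" and B :: "'b esp" and C :: "'c esp"
    and S :: "'s esp" and T :: "'t esp"
    and \<sigma> :: "'s \<Rightarrow> 'a + 'b" and \<tau> :: "'t \<Rightarrow> 'b + 'c"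
  assumes "arena A" and "arena B" and "arena C"
    and "strategy S (par (dual A) B) \<sigma>" and "backward_sequential S"
    and "strategy T (par (dual B) C) \<tau>" and "backward_sequential T"
  shows "backward_sequential (comp_es A B C S T \<sigma> \<tau>)"
  unfolding backward_sequential_def
proof (intro ballI allI impI)
  fix e e1 e2
  assume "e \<in> events (comp_es A B C S T \<sigma> \<tau>)"
    and h: "leq (comp_es A B C S T \<sigma> \<tau>) e1 e \<and> leq (comp_es A B C S T \<sigma> \<tau>) e2 e"
  have d1: "e1 \<in> events (comp_es A B C S T \<sigma> \<tau>) \<and> e \<in> events (comp_es A B C S T \<sigma> \<tau>) \<and> e1 \<subseteq> e \<and>
    secured_bij (par S C) (par A T) (sig_par \<sigma>) (par_tau \<tau>) e1 \<and> (\<exists>u. is_top (par S C) (par A T) e1 u) \<and>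
    secured_bij (par S C) (par A T) (sig_par \<sigma>) (par_tau \<tau>) e \<and> (\<exists>u. is_top (par S C) (par A T) e u)"
    using comp_leqD h by blast
  have d2: "e2 \<in> events (comp_es A B C S T \<sigma> \<tau>) \<and> e2 \<subseteq> e \<and>
    secured_bij (par S C) (par A T) (sig_par \<sigma>) (par_tau \<tau>) e2 \<and> (\<exists>u. is_top (par S C) (par A T) e2 u)"
    using comp_leqD h by blast
  interpret csp A B C S T \<sigma> \<tau> e
    by unfold_locales (use assms d1 in blast)+
  obtain u u1 u2 where "is_top (par S C) (par A T) e u" "is_top (par S C) (par A T) e1 u1"
    "is_top (par S C) (par A T) e2 u2" using d1 d2 by blast
  then have "e1 \<subseteq> e2 \<or> e2 \<subseteq> e1" using prime_sub d1 d2 by blast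
  then show "leq (comp_es A B C S T \<sigma> \<tau>) e1 e2 \<or> leq (comp_es A B C S T \<sigma> \<tau>) e2 e1"
    using comp_leqI d1 d2 by blast
qed

end
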